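(* Let $n$ be an odd positive integer and let $\mathrm{Dic}_n=\langle x,y\mid x^{2n}=1,\ y^2=x^n,\ y^{-1}xy=x^{-1}\rangle$ be the dicyclic group of order $4n$, whose irreducible complex characters are $\chi_0,\chi_1,\chi_2,\chi_3,\psi_1,\ldots,\psi_{n-1}$ as described in the context. Let $C\subset\mathrm{Dic}_n$ be a nonempty subset that is a Delsarte $T$-design for $T=T(C)$ in the conjugacy class scheme of $\mathrm{Dic}_n$. Then $\chi_2\in T$ if and only if $\chi_3\in T$; and for each $1\le \ell\le n-1$ and each integer $k$ with $-n<k<n$ and $\gcd(k,2n)=1$, $\psi_\ell\in T$ if and only if $\psi_{|k\ell\ \mathrm{MOD}\ 2n|}\in T$.
   Context: Every element of $\mathrm{Dic}_n$ is uniquely $x^k$ or $yx^k$ with $0\le k<2n$. The irreducible characters (for $n$ odd) are: $\chi_0\equiv1$; $\chi_1(x^k)=1$, $\chi_1(yx^k)=-1$; $\chi_2(x^k)=(-1)^k$, $\chi_2(yx^{k})=i$ for $k$ even and $-i$ for $k$ odd; $\chi_3=\overline{\chi_2}$; and for $1\le r\le n-1$, $\psi_r(x^k)=2\cos(\pi rk/n)$, $\psi_r(yx^k)=0$. For an irreducible character $\chi$ of a finite group $G$, the corresponding primitive idempotent of the conjugacy class association scheme is the matrix $E_\chi\in\mathrm{Mat}_G(\mathbb{C})$ with $(g,h)$-entry $\frac{\chi(1)}{|G|}\overline{\chi(g^{-1}h)}$. For a nonempty $C\subseteq G$ with $0/1$ characteristic vector $\mathbf{x}$, $T(C)$ is the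 set of irreducible characters $\chi$ with $E_\chi\mathbf{x}=0$, and $C$ is a Delsarte $T$-design if $E_\chi\mathbf{x}=0$ for all $\chi\in T$. For integers $k$ and $m>1$, $k\ \mathrm{MOD}\ m$ denotes the unique $k'\equiv k\pmod m$ with $-m/2<k'\le m/2$. *)

theory Defs
  imports Complex_Main
begin

text \<open>Elements of Dic_n: (False,k) stands for x^k, (True,k) stands for y x^k, with 0 \<le> k < 2n.\<close>

type_synonym dic = "bool \<times> int"

definition dic_elems :: "nat \<Rightarrow> dic set" where
  "dic_elems n = {(b,k). 0 \<le> k \<and> k < 2 * int n}"

text \<open>Multiplication derived from x^(2n)=1, y^2=x^n, y^(-1) x y = x^(-1) (so x^a y = y x^(-a)).\<close>
fun dic_mult :: "nat \<Rightarrow> dic \<Rightarrow> dic \<Rightarrow> dic" where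
  "dic_mult n (False, i) (False, j) = (False, (i + j) mod (2 * int n))"
| "dic_mult n (False, i) (True, j) = (True, (j - i) mod (2 * int n))"
| "dic_mult n (True, i) (False, j) = (True, (i + j) mod (2 * int n))"
| "dic_mult n (True, i) (True, j) = (False, (int n + j - i) mod (2 * int n))"

fun dic_inv :: "nat \<Rightarrow> dic \<Rightarrow> dic" where
  "dic_inv n (False, i) = (False, (- i) mod (2 * int n))"
| "dic_inv n (True, i) = (True, (i + int n) mod (2 * int n))"

datatype dchar = Chi0 | Chi1 | Chi2 | Chi3 | Psi nat

definition dic_irr :: "nat \<Rightarrow> dchar set" where
  "dic_irr n = {Chi0, Chi1, Chi2, Chi3} \<union> {Psi r | r. 1 \<le> r \<and> r \<le> n - 1}"

fun dic_char :: "nat \<Rightarrow> dchar \<Rightarrow> dic \<Rightarrow> complex" where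
  "dic_char n Chi0 g = 1"
| "dic_char n Chi1 (b, k) = (if b then -1 else 1)"
| "dic_char n Chi2 (b, k) =
     (if \<not> b then (if even k then 1 else -1) else (if even k then \<i> else - \<i>))"
| "dic_char n Chi3 (b, k) =
     (if \<not> b then (if even k then 1 else -1) else (if even k then - \<i> else \<i>))"
| "dic_char n (Psi r) (b, k) =
     (if b then 0 else complex_of_real (2 * cos (pi * real r * real_of_int k / real n)))"

definition dic_idem :: "nat \<Rightarrow> dchar \<Rightarrow> dic \<Rightarrow> dic \<Rightarrow> complex" where
  "dic_idem n \<chi> g h =
     dic_char n \<chi> (False, 0) / of_nat (card (dic_elems n))
       * cnj (dic_char n \<chi> (dic_mult n (dic_inv n g) h))"

definition idem_apply :: "nat \<Rightarrow> dchar \<Rightarrow> dic set \<Rightarrow> dic \<Rightarrow> complex" where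
  "idem_apply n \<chi> C g = (\<Sum>h\<in>dic_elems n. dic_idem n \<chi> g h * (if h \<in> C then 1 else 0))"

definition annihilates :: "nat \<Rightarrow> dchar \<Rightarrow> dic set \<Rightarrow> bool" where
  "annihilates n \<chi> C \<longleftrightarrow> (\<forall>g\<in>dic_elems n. idem_apply n \<chi> C g = 0)"

definition T_of :: "nat \<Rightarrow> dic set \<Rightarrow> dchar set" where
  "T_of n C = {\<chi> \<in> dic_irr n. annihilates n \<chi> C}"

definition delsarte_design :: "nat \<Rightarrow> dchar set \<Rightarrow> dic set \<Rightarrow> bool" where
  "delsarte_design n T C \<longleftrightarrow> (\<forall>\<chi>\<in>T. annihilates n \<chi> C)"

definition cmod :: "int \<Rightarrow> int \<Rightarrow> int" where
  "cmod k m = (THE k'. k' mod m = k mod m \<and> - m < 2 * k' \<and> 2 * k' \<le> m)"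

end

theory Submission
  imports "Berlekamp_Zassenhaus.Poly_Mod" Defs
begin


lemma freshman:
  fixes u v :: "'a::comm_ring_1"
  assumes "prime p"
  shows "\<exists>w. (u+v)^p = u^p + v^p + of_nat p * w"
proof -
  have p1: "p > 1" using assms prime_gt_1_nat by blast
  define w where "w = (\<Sum>k\<in>{1..<p}. of_nat ((p choose k) div p) * u^k * v^(p-k))"
  have dv: "of_nat (p choose k) = (of_nat p * of_nat ((p choose k) div p) :: 'a)" if "k \<in> {1..<p}" for k
  proof -
    have "p dvd (p choose k)" using that p1 assms by (intro dvd_choose_prime) auto
    then have "p choose k = p * ((p choose k) div p)" by simp
    then show ?thesis by (metis of_nat_mult)
  qed
  have "(u+v)^p = (\<Sum>k\<le>p. of_nat (p choose k) * u^k * v^(p-k))" by (rule binomial_ring)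
  also have "{..p} = {0} \<union> {1..<p} \<union> {p}" using p1 by auto
  also have "(\<Sum>k\<in>{0} \<union> {1..<p} \<union> {p}. of_nat (p choose k) * u^k * v^(p-k))
     = v^p + (\<Sum>k\<in>{1..<p}. of_nat (p choose k) * u^k * v^(p-k)) + u^p"
    using p1 by (subst sum.union_disjoint, auto simp: sum.union_disjoint)
  also have "(\<Sum>k\<in>{1..<p}. of_nat (p choose k) * u^k * v^(p-k)) = of_nat p * w"
    unfolding w_def sum_distrib_left by (rule sum.cong) (auto simp: dv mult.assoc)
  finally show ?thesis by (auto simp: algebra_simps)
qed

lemma fermat_nat_int:
  assumes "prime p"
  shows "int p dvd (int a)^p - int a"
proof (induction a)
  case 0 then show ?case using assms by (simp add: prime_gt_0_nat power_0_left)
next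
  case (Suc a)
  obtain w where w: "(int a + 1)^p = (int a)^p + 1^p + of_nat p * (w::int)"
    using freshman[OF assms] by blast
  have eq: "int (Suc a) ^ p - int (Suc a) = ((int a)^p - int a) + int p * w"
    using w by (simp add: algebra_simps)
  show ?case unfolding eq using Suc.IH by (intro dvd_add) auto
qed

lemma fermat_int:
  assumes "prime p"
  shows "int p dvd a^p - a"
proof -
  have pp: "int p > 0" using assms prime_gt_0_nat by simp
  define b where "b = nat (a mod int p)"
  have b: "int b = a mod int p" using pp unfolding b_def by simp
  have h1: "(a mod int p)^p mod int p = a^p mod int p" by (rule power_mod)
  have h2: "(a mod int p) mod int p = a mod int p" by simp
  have h3: "((a mod int p)^p - (a mod int p)) mod int p = (a^p - a) mod int p"
    using mod_diff_cong[OF h1 h2] .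
  have "int p dvd (a mod int p)^p - (a mod int p)" using fermat_nat_int[OF assms, of b] unfolding b .
  then have "((a mod int p)^p - (a mod int p)) mod int p = 0" by (rule dvd_imp_mod_0)
  then have "(a^p - a) mod int p = 0" using h3 by simp
  then show ?thesis by (rule mod_0_imp_dvd)
qed

definition pc :: "nat \<Rightarrow> int poly \<Rightarrow> int poly \<Rightarrow> bool" where
  "pc p A B \<longleftrightarrow> (\<exists>s. A = B + smult (int p) s)"

lemma pc_refl: "pc p A A" unfolding pc_def by (intro exI[of _ 0]) simp
lemma pc_trans: "pc p A B \<Longrightarrow> pc p B C \<Longrightarrow> pc p A C"
proof -
  assume "pc p A B" "pc p B C"
  then obtain s t where "A = B + smult (int p) s" "B = C + smult (int p) t" unfolding pc_def by blast
  then have "A = C + smult (int p) (t + s)" by (simp add: smult_add_right)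
  then show ?thesis unfolding pc_def by blast
qed

lemma pc_sym: "pc p A B \<Longrightarrow> pc p B A"
proof -
  assume "pc p A B"
  then obtain s where "A = B + smult (int p) s" unfolding pc_def by blast
  then have "B = A + smult (int p) (- s)" by simp
  then show ?thesis unfolding pc_def by blast
qed

lemma pc_add: "pc p A B \<Longrightarrow> pc p C D \<Longrightarrow> pc p (A + C) (B + D)"
proof -
  assume "pc p A B" "pc p C D"
  then obtain s t where "A = B + smult (int p) s" "C = D + smult (int p) t" unfolding pc_def by blast
  then have "A + C = (B + D) + smult (int p) (s + t)" by (simp add: smult_add_right)
  then show ?thesis unfolding pc_def by blast
qed

lemma ring_aux: "(B + K*s)*(D + K*t) = B*D + K*(B*t + s*D + K*(s*t))" for B K s D t :: "'a::comm_ring_1"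
  by (simp add: algebra_simps)

lemma smult_as: "smult k x = [:k:] * x" by simp

lemma pc_mult: "pc p A B \<Longrightarrow> pc p C D \<Longrightarrow> pc p (A * C) (B * D)"
proof -
  assume "pc p A B" "pc p C D"
  then obtain s t where A: "A = B + smult (int p) s" and C: "C = D + smult (int p) t" unfolding pc_def by blast
  show ?thesis unfolding pc_def A C smult_as
    by (intro exI[of _ "B * t + s * D + [:int p:] * (s * t)"]) (rule ring_aux)
qed

lemma pc_freshman: "prime p \<Longrightarrow> pc p ((A + B)^p) (A^p + B^p)"
  using freshman[of p A B] unfolding pc_def by (auto simp: of_nat_poly)

lemma pc_const: "prime p \<Longrightarrow> pc p ([:a:]^p) [:a:]"
proof -
  assume p: "prime p"
  obtain c where c: "a^p - a = int p * c" using fermat_int[OF p, of a] by blast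
  have c2: "a^p = a + int p * c" using c by simp
  show ?thesis unfolding pc_def by (intro exI[of _ "[:c:]"]) (simp add: poly_const_pow c2)
qed

lemma frobenius: "prime p \<Longrightarrow> pc p (pcompose g (monom 1 p)) (g^p)"
proof (induction g)
  case 0
  then show ?case using prime_gt_0_nat by (simp add: pc_refl power_0_left)
next
  case (pCons a h)
  have e: "pCons a h = [:a:] + monom 1 1 * h" by (simp add: monom_Suc)
  have "pc p ((pCons a h)^p) ([:a:]^p + (monom 1 1 * h)^p)" unfolding e using pc_freshman[OF pCons(3)] .
  moreover have "pc p ([:a:]^p + (monom 1 1 * h)^p) ([:a:] + monom 1 p * pcompose h (monom 1 p))"
    apply (rule pc_add[OF pc_const[OF pCons(3)]])
    unfolding power_mult_distrib
    by (rule pc_mult) (auto simp: pc_refl pc_sym[OF pCons(2)[OF pCons(3)]] monom_power)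
  ultimately have "pc p ((pCons a h)^p) (pcompose (pCons a h) (monom 1 p))"
    by (simp add: pcompose_pCons pc_trans)
  then show ?case by (rule pc_sym)
qed




definition ev :: "complex \<Rightarrow> int poly \<Rightarrow> complex" where
  "ev z P = poly (of_int_poly P) z"

lemma ev_mult[simp]: "ev z (A * B) = ev z A * ev z B"
  unfolding ev_def by (simp add: of_int_poly_hom.hom_mult)
lemma ev_add[simp]: "ev z (A + B) = ev z A + ev z B"
  unfolding ev_def by (simp add: of_int_poly_hom.hom_add)
lemma ev_diff[simp]: "ev z (A - B) = ev z A - ev z B"
  unfolding ev_def by (simp add: of_int_poly_hom.hom_minus)
lemma ev_uminus[simp]: "ev z (- A) = - ev z A"
  unfolding ev_def by (simp add: of_int_poly_hom.hom_uminus)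
lemma ev_one[simp]: "ev z 1 = 1"
  unfolding ev_def by (simp add: of_int_poly_hom.hom_one)
lemma ev_power[simp]: "ev z (A ^ k) = ev z A ^ k"
  by (induction k) auto
lemma ev_const[simp]: "ev z [:c:] = of_int c"
  unfolding ev_def by (cases "c = 0") (auto simp: map_poly_pCons)
lemma ev_smult[simp]: "ev z (smult c A) = of_int c * ev z A"
  unfolding ev_def by (simp add: of_int_hom.map_poly_hom_smult)
lemma ev_monom[simp]: "ev z (monom c k) = of_int c * z ^ k"
  unfolding ev_def by (simp add: poly_monom)
lemma ev_pcompose_monom: "ev z (pcompose g (monom 1 k)) = ev (z ^ k) g"
  unfolding ev_def by (simp add: of_int_hom.map_poly_pcompose poly_pcompose poly_monom)
lemma ev_prod_mset: "ev z (prod_mset M) = (\<Prod>f\<in>#M. ev z f)"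
  by (induction M) auto

lemma monic_prime_factor:
  fixes f Q :: "int poly"
  assumes "f \<in># prime_factorization Q" "lead_coeff Q = 1"
  shows "lead_coeff f = 1"
proof -
  have pf: "prime f" and fd: "f dvd Q" using assms in_prime_factors_imp_prime in_prime_factors_imp_dvd by blast+
  then obtain t where Qt: "Q = f * t" by blast
  have "lead_coeff f * lead_coeff t = 1" using assms(2) Qt by (simp add: lead_coeff_mult)
  then have l: "lead_coeff f = 1 \<or> lead_coeff f = -1" by (simp add: zmult_eq_1_iff) blast
  have f0: "f \<noteq> 0" using pf by auto
  have "unit_factor f = 1" using normalize_prime[OF pf] unit_factor_normalize[OF f0] by simp
  then have "sgn (lead_coeff f) = 1" by (simp add: unit_factor_poly_def)
  with l show ?thesis by auto
qed

lemma minpoly_exists: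
  fixes z :: complex and Q :: "int poly"
  assumes Q1: "lead_coeff Q = 1" and Qz: "ev z Q = 0"
  obtains f where "prime f" "lead_coeff f = 1" "ev z f = 0" "\<And>H. ev z H = 0 \<Longrightarrow> f dvd H"
proof -
  have Q0: "Q \<noteq> 0" using Q1 by auto
  have "normalize Q = Q" using Q1 by (simp add: normalize_poly_def unit_factor_poly_def)
  define X where "X = prod_mset (prime_factorization Q)"
  have "normalize X = Q" using prod_mset_prime_factorization_weak[OF Q0] \<open>normalize Q = Q\<close> unfolding X_def by simp
  then have XQ: "X = unit_factor X * Q" using unit_factor_mult_normalize[of X] by simp
  have "ev z X = ev z (unit_factor X * Q)" using XQ by (rule arg_cong)
  then have "ev z X = ev z (unit_factor X) * ev z Q" by simp
  then have "ev z X = 0" using Qz by simp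
  then have "(\<Prod>f\<in>#prime_factorization Q. ev z f) = 0" unfolding X_def ev_prod_mset .
  then obtain f where fin: "f \<in># prime_factorization Q" and fz: "ev z f = 0"
    by (auto simp: prod_mset_zero_iff)
  have pf: "prime f" using fin in_prime_factors_imp_prime by blast
  have mf: "lead_coeff f = 1" using monic_prime_factor[OF fin Q1] .
  have f0: "f \<noteq> 0" using mf by auto
  define K where "K = {n. \<exists>R. R \<noteq> 0 \<and> ev z R = 0 \<and> degree R = n}"
  have fK: "degree f \<in> K" using f0 fz unfolding K_def by blast
  define m0 where "m0 = (LEAST n. n \<in> K)"
  have "m0 \<in> K" unfolding m0_def using fK by (rule LeastI)
  then obtain R where R0: "R \<noteq> 0" and Rz: "ev z R = 0" and Rd: "degree R = m0" unfolding K_def by blast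
  have minK: "m0 \<le> degree S" if "S \<noteq> 0" "ev z S = 0" for S
    unfolding m0_def by (rule Least_le) (use that in \<open>auto simp: K_def\<close>)
  have "m0 \<le> degree f" using minK f0 fz by blast
  obtain q S where pd: "pseudo_divmod f R = (q, S)" by (cases "pseudo_divmod f R") auto
  define a where "a = coeff R (degree R) ^ (Suc (degree f) - degree R)"
  have a0: "a \<noteq> 0" using R0 unfolding a_def by simp
  have e1: "smult a f = R * q + S" using pseudo_divmod(1)[OF R0 pd] unfolding a_def .
  have e2: "S = 0 \<or> degree S < degree R" using pseudo_divmod(2)[OF R0 pd] .
  have Sz: "ev z S = 0" using arg_cong[OF e1, of "ev z"] fz Rz by simp
  have S0: "S = 0"
  proof (rule ccontr)
    assume "S \<noteq> 0"
    then have "m0 \<le> degree S" using minK Sz by blast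
    with e2 Rd \<open>S \<noteq> 0\<close> show False by simp
  qed
  have Rq: "R * q = f * [:a:]" using e1 S0 by simp
  have "f dvd R * q" unfolding Rq by (rule dvd_triv_left)
  then have "f dvd R \<or> f dvd q" using prime_elem_dvd_multD[OF prime_imp_prime_elem[OF pf]] by blast
  then have "degree f \<le> m0"
  proof
    assume "f dvd R" then show ?thesis using R0 Rd dvd_imp_degree_le by blast
  next
    assume "f dvd q"
    then obtain q2 where q2: "q = f * q2" by blast
    have "smult a f = f * (R * q2)" using e1 S0 q2 by (simp add: ac_simps)
    then have "[:a:] * f = (R * q2) * f" by (simp add: ac_simps)
    then have aR: "[:a:] = R * q2" using f0 mult_right_cancel by blast
    then have "q2 \<noteq> 0" using a0 by auto
    then have "degree (R * q2) = degree R + degree q2" using R0 by (rule degree_mult_eq[rotated])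
    then have "degree R = 0" using aR by (metis add_is_0 degree_pCons_0)
    then obtain c where "R = [:c:]" by (meson degree_eq_zeroE)
    then show ?thesis using Rz R0 by simp
  qed
  then have fdeg: "degree f = m0" using \<open>m0 \<le> degree f\<close> by simp
  have fdiv: "f dvd H" if Hz: "ev z H = 0" for H
  proof -
    obtain q S where pd: "pseudo_divmod H f = (q, S)" by (cases "pseudo_divmod H f") auto
    have e1: "H = f * q + S" using pseudo_divmod(1)[OF f0 pd] mf by simp
    have e2: "S = 0 \<or> degree S < degree f" using pseudo_divmod(2)[OF f0 pd] .
    have Sz: "ev z S = 0" using arg_cong[OF e1, of "ev z"] fz Hz by simp
    have "S = 0"
    proof (rule ccontr)
      assume "S \<noteq> 0"
      then have "m0 \<le> degree S" using minK Sz by blast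
      with e2 fdeg \<open>S \<noteq> 0\<close> show False by simp
    qed
    then show ?thesis using e1 by simp
  qed
  show ?thesis using that[OF pf mf fz fdiv] .
qed




lemma galois_prime:
  fixes z :: complex and d p :: nat and P :: "int poly"
  assumes d0: "d > 0" and zd: "z ^ d = 1" and p: "prime p" and pd: "\<not> p dvd d" and Pz: "ev z P = 0"
  shows "ev (z ^ p) P = 0"
proof -
  define Q :: "int poly" where "Q = monom 1 d - 1"
  have Qe: "Q = - 1 + monom 1 d" unfolding Q_def by simp
  have "lead_coeff Q = 1" unfolding Qe
    by (subst lead_coeff_add_le) (use d0 in \<open>auto simp: degree_monom_eq\<close>)
  note Q1 = this
  have Qz: "ev w Q = 0" if "w ^ d = 1" for w using that unfolding Q_def by simp
  obtain f where pf: "prime f" and mf: "lead_coeff f = 1" and fz: "ev z f = 0"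
    and fdiv: "\<And>H. ev z H = 0 \<Longrightarrow> f dvd H"
    using minpoly_exists[OF Q1 Qz[OF zd]] by blast
  have zpd: "(z ^ p) ^ d = 1"
  proof -
    have "(z ^ p) ^ d = (z ^ d) ^ p" by (simp add: power_mult[symmetric] mult.commute)
    then show ?thesis using zd by simp
  qed
  obtain g where pg: "prime g" and mg: "lead_coeff g = 1" and gz: "ev (z ^ p) g = 0"
    and gdiv: "\<And>H. ev (z ^ p) H = 0 \<Longrightarrow> g dvd H"
    using minpoly_exists[OF Q1 Qz[OF zpd]] by blast
  show ?thesis
  proof (cases "ev (z ^ p) f = 0")
    case True
    obtain t where "P = f * t" using fdiv[OF Pz] by blast
    then show ?thesis using True by simp
  next
    case False
    have fg: "f \<noteq> g" using False gz by auto
    have "f dvd Q" "g dvd Q" using fdiv[OF Qz[OF zd]] gdiv[OF Qz[OF zpd]] by auto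
    then have "f * g dvd Q" by (rule divides_mult[OF _ _ primes_coprime[OF pf pg fg]])
    then obtain r where "Q = f * g * r" by (rule dvdE)
    then have Qr: "Q = f * (g * r)" by (simp only: mult.assoc)
    obtain s where gs: "pcompose g (monom 1 p) = g ^ p + smult (int p) s"
      using frobenius[OF p, of g] unfolding pc_def by blast
    have "ev z (pcompose g (monom 1 p)) = 0" using ev_pcompose_monom gz by simp
    then have gp: "ev z g ^ p = - of_nat p * ev z s" unfolding gs by (simp add: eq_neg_iff_add_eq_0)
    have iden: "monom 1 1 * pderiv Q - smult (int d) Q = [:int d:]"
    proof -
      have "pderiv Q = monom (int d) (d - 1)" unfolding Q_def by (simp add: pderiv_diff pderiv_monom)
      moreover have "monom 1 1 * monom (int d) (d - 1) = (monom (int d) d :: int poly)"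
        using d0 by (simp add: mult_monom)
      ultimately show ?thesis unfolding Q_def by (simp add: smult_diff_right smult_monom)
    qed
    have dQ: "pderiv Q = pderiv f * (g * r) + f * pderiv (g * r)" unfolding Qr by (simp add: pderiv_mult)
    have "ev z (monom 1 1 * pderiv Q - smult (int d) Q) = of_nat d" unfolding iden by simp
    then have dz: "of_nat d = z * (ev z (pderiv f) * ev z g * ev z r)"
      using Qz[OF zd] fz unfolding dQ by (simp add: mult.assoc)
    define W where "W = smult (int p) (monom 1 p * pderiv f ^ p * r ^ p * s) + [:int d ^ p:]"
    have "(of_nat d :: complex) ^ p = z ^ p * ev z (pderiv f) ^ p * ev z r ^ p * ev z g ^ p"
      unfolding dz by (simp add: power_mult_distrib)
    then have "ev z W = 0" unfolding W_def gp by simp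
    then obtain h where Wh: "W = f * h" using fdiv by blast
    have "[:int d ^ p:] = W - smult (int p) (monom 1 p * pderiv f ^ p * r ^ p * s)"
      unfolding W_def by simp
    also have "\<dots> = h * f + smult (int p) (- (monom 1 p * pderiv f ^ p * r ^ p * s))"
      unfolding Wh by (simp add: mult.commute)
    finally have "[:int d ^ p:] = h * f + smult (int p) (- (monom 1 p * pderiv f ^ p * r ^ p * s))" .
    then have "poly_mod.dvdm (int p) f [:int d ^ p:]"
      by (intro poly_mod.div_mod_imp_dvdm) blast
    moreover have "degree f > 0"
    proof (rule ccontr)
      assume "\<not> degree f > 0"
      then have "degree f = 0" by simp
      then obtain c where fc: "f = [:c:]" by (rule degree_eq_zeroE)
      then have "c = 1" using mf by simp
      then have "f = 1" using fc by simp
      then show False using pf by simp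
    qed
    ultimately have "(int d ^ p) mod int p = 0" by (rule poly_mod.monic_dvdm_constant[OF _ mf])
    then have "int p dvd int (d ^ p)" by auto
    then have "p dvd d ^ p" by (simp only: int_dvd_int_iff)
    then have "p dvd d" using p prime_dvd_power by blast
    then show ?thesis using pd by simp
  qed
qed

lemma galois_k:
  fixes z :: complex and d k :: nat and P :: "int poly"
  assumes d0: "d > 0" and zd: "z ^ d = 1" and cop: "gcd k d = 1" and Pz: "ev z P = 0"
  shows "ev (z ^ k) P = 0"
  using cop
proof (induction k rule: less_induct)
  case (less k)
  show ?case
  proof (cases "k = 0")
    case True
    then have "d = 1" using less.prems by simp
    then have "z = 1" using zd by simp
    then show ?thesis using Pz True by simp
  next
    case k0: False
    show ?thesis
    proof (cases "k = 1")
      case True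
      then show ?thesis using Pz by simp
    next
      case False
      obtain p where p: "prime p" "p dvd k" using prime_factor_nat[OF False] by blast
      from p(2) obtain k' where kk: "k = p * k'" by (rule dvdE)
      have "k' \<noteq> 0" using kk k0 by (cases k') simp_all
      then have "k' > 0" by simp
      then have "k' < p * k'" using prime_gt_1_nat[OF p(1)] by (intro n_less_m_mult_n) auto
      then have "k' < k" using kk by simp
      moreover have "gcd k' d = 1"
      proof -
        have "gcd k' d dvd k'" by (rule gcd_dvd1)
        then have "gcd k' d dvd k" unfolding kk by (rule dvd_mult)
        then have "gcd k' d dvd gcd k d" by (rule gcd_greatest[OF _ gcd_dvd2])
        then show ?thesis using less.prems by simp
      qed
      ultimately have IH: "ev (z ^ k') P = 0" by (rule less.IH)
      have "\<not> p dvd d"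
      proof
        assume "p dvd d"
        then have "p dvd gcd k d" by (rule gcd_greatest[OF p(2)])
        then have "p = 1" using less.prems by simp
        then show False using p(1) by simp
      qed
      moreover have "(z ^ k') ^ d = 1"
      proof -
        have "(z ^ k') ^ d = z ^ (k' * d)" by (rule power_mult[symmetric])
        also have "\<dots> = z ^ (d * k')" by (simp only: mult.commute)
        also have "\<dots> = (z ^ d) ^ k'" by (rule power_mult)
        finally show ?thesis using zd by simp
      qed
      ultimately have "ev ((z ^ k') ^ p) P = 0" using galois_prime[OF d0 _ p(1) _ IH] by simp
      moreover have "(z ^ k') ^ p = z ^ k"
      proof -
        have "(z ^ k') ^ p = z ^ (k' * p)" by (rule power_mult[symmetric])
        also have "\<dots> = z ^ k" unfolding kk by (simp only: mult.commute)
        finally show ?thesis .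
      qed
      ultimately show ?thesis by simp
    qed
  qed
qed




lemma cmod_props:
  fixes x N :: int
  assumes N: "N > 0"
  shows "cmod x N mod N = x mod N \<and> - N < 2 * cmod x N \<and> 2 * cmod x N \<le> N"
proof -
  define r where "r = x mod N"
  have r0: "0 \<le> r" "r < N" unfolding r_def using N by simp_all
  define c where "c = (if 2 * r \<le> N then r else r - N)"
  have cp: "c mod N = x mod N \<and> - N < 2 * c \<and> 2 * c \<le> N"
  proof (cases "2 * r \<le> N")
    case True
    then show ?thesis unfolding c_def r_def using r0 r_def by simp
  next
    case False
    have "(r - N) mod N = r mod N" by (simp add: mod_diff_right_eq[symmetric])
    then show ?thesis unfolding c_def using False r0 r_def by simp
  qed
  have uniq: "y = c" if hy: "y mod N = x mod N \<and> - N < 2 * y \<and> 2 * y \<le> N" for y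
  proof -
    have "y mod N = c mod N" using hy cp by simp
    then have "N dvd y - c" by (simp add: mod_eq_dvd_iff)
    then obtain q where q: "y - c = N * q" by (rule dvdE)
    have lo: "- N < y - c" and hi: "y - c < N" using hy cp by linarith+
    have "q = 0"
    proof (rule ccontr)
      assume "q \<noteq> 0"
      then consider "q \<ge> 1" | "q \<le> -1" by linarith
      then show False
      proof cases
        case 1
        then have "N * 1 \<le> N * q" using N by (intro mult_left_mono) simp_all
        then show False using hi q by simp
      next
        case 2
        then have "N * q \<le> N * (-1)" using N by (intro mult_left_mono) simp_all
        then show False using lo q by simp
      qed
    qed
    then show ?thesis using q by simp
  qed
  have "cmod x N = c" unfolding cmod_def
    by (rule the_equality) (use cp uniq in blast)+
  then show ?thesis using cp by simp
qed

definition Zf :: "nat \<Rightarrow> int set \<Rightarrow> int \<Rightarrow> complex" where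
  "Zf n S r = (\<Sum>j\<in>S. cis (pi * of_int r * of_int j / of_nat n))"

lemma cis_int_period: "cis (x + 2 * pi * of_int m) = cis x"
proof -
  have "cis (2 * pi * of_int m) = 1" by (rule cis_multiple_2pi) simp
  then show ?thesis using cis_mult[of x "2 * pi * of_int m"] by simp
qed

lemma cis_per:
  assumes n: "n > 0" and "t mod (2 * int n) = t' mod (2 * int n)"
  shows "cis (pi * of_int r * of_int t / of_nat n) = cis (pi * of_int r * of_int t' / of_nat n)"
proof -
  have "2 * int n dvd t - t'" using assms(2) by (simp add: mod_eq_dvd_iff)
  then obtain q where q: "t - t' = 2 * int n * q" by (rule dvdE)
  have t: "of_int t = (of_int t' + 2 * of_nat n * of_int q :: real)"
    using arg_cong[OF q, of "of_int :: int \<Rightarrow> real"] by simp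
  have "pi * of_int r * of_int t / of_nat n = pi * of_int r * of_int t' / of_nat n + 2 * pi * of_int (r * q)"
    unfolding t using n by (simp add: field_simps)
  then show ?thesis by (simp only: cis_int_period)
qed

lemma Zf_per:
  assumes n: "n > 0" and "r mod (2 * int n) = r' mod (2 * int n)"
  shows "Zf n S r = Zf n S r'"
  unfolding Zf_def
proof (rule sum.cong[OF refl])
  fix j assume "j \<in> S"
  have "cis (pi * of_int j * of_int r / of_nat n) = cis (pi * of_int j * of_int r' / of_nat n)"
    by (rule cis_per[OF assms])
  then show "cis (pi * of_int r * of_int j / of_nat n) = cis (pi * of_int r' * of_int j / of_nat n)"
    by (simp add: mult.commute mult.left_commute)
qed

lemma Zf_neg: "Zf n S (- r) = cnj (Zf n S r)"
  unfolding Zf_def cnj_sum by (rule sum.cong) (simp_all add: cis_cnj)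

lemma ev_zero[simp]: "ev z 0 = 0" unfolding ev_def by simp

lemma ev_sum: "ev z (sum f A) = (\<Sum>x\<in>A. ev z (f x))"
  by (induction A rule: infinite_finite_induct) simp_all

lemma Zf_galois_pos:
  fixes k :: nat
  assumes n: "n > 0" and S: "\<forall>j\<in>S. j \<ge> 0" and k: "gcd k (2 * n) = 1" and Z: "Zf n S r = 0"
  shows "Zf n S (int k * r) = 0"
proof -
  define z where "z = cis (pi * of_int r / of_nat n)"
  have zd: "z ^ (2 * n) = 1" unfolding z_def DeMoivre
  proof -
    have "real (2 * n) * (pi * of_int r / of_nat n) = 2 * pi * of_int r" using n by simp
    then show "cis (real (2 * n) * (pi * of_int r / real n)) = 1" using cis_multiple_2pi[of "of_int r"] by simp
  qed
  define P :: "int poly" where "P = (\<Sum>j\<in>S. monom 1 (nat j))"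
  have evP: "ev (z ^ m) P = Zf n S (int m * r)" for m
    unfolding P_def ev_sum Zf_def
  proof (rule sum.cong[OF refl])
    fix j assume "j \<in> S"
    then have j0: "j \<ge> 0" using S by blast
    have "ev (z ^ m) (monom 1 (nat j)) = z ^ (m * nat j)" by (simp add: power_mult)
    also have "\<dots> = cis (real (m * nat j) * (pi * of_int r / of_nat n))" unfolding z_def DeMoivre ..
    also have "real (m * nat j) * (pi * of_int r / of_nat n) = pi * of_int (int m * r) * of_int j / of_nat n"
      using j0 by simp
    finally show "ev (z ^ m) (monom 1 (nat j)) = cis (pi * of_int (int m * r) * of_int j / of_nat n)" .
  qed
  have "ev (z ^ 1) P = 0" using evP[of 1] Z by simp
  then have "ev z P = 0" by simp
  from galois_k[OF _ zd k this] n have "ev (z ^ k) P = 0" by simp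
  then show ?thesis using evP by simp
qed



definition C0 :: "dic set \<Rightarrow> int set" where "C0 C = {j. (False, j) \<in> C}"
definition C1 :: "dic set \<Rightarrow> int set" where "C1 C = {j. (True, j) \<in> C}"

lemma G_eq: "dic_elems n = UNIV \<times> {0..<2 * int n}"
  unfolding dic_elems_def by auto

lemma fin_G: "finite (dic_elems n)"
  unfolding G_eq by simp

lemma sum_C_split:
  assumes C: "C \<subseteq> dic_elems n"
  shows "(\<Sum>h\<in>C. F h) = (\<Sum>j\<in>C0 C. F (False, j)) + (\<Sum>j\<in>C1 C. F (True, j))"
proof -
  have fC: "finite C" using C fin_G finite_subset by blast
  have Ceq: "C = Pair False ` C0 C \<union> Pair True ` C1 C"
  proof
    show "C \<subseteq> Pair False ` C0 C \<union> Pair True ` C1 C"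
    proof
      fix x assume xC: "x \<in> C"
      obtain b j where x: "x = (b, j)" by (cases x)
      show "x \<in> Pair False ` C0 C \<union> Pair True ` C1 C"
        using xC unfolding x C0_def C1_def by (cases b) auto
    qed
    show "Pair False ` C0 C \<union> Pair True ` C1 C \<subseteq> C" by (auto simp: C0_def C1_def)
  qed
  have f0: "finite (Pair False ` C0 C)" and f1: "finite (Pair True ` C1 C)"
    using fC Ceq by (metis finite_Un)+
  have d: "Pair False ` C0 C \<inter> Pair True ` C1 C = {}" by auto
  have "(\<Sum>h\<in>C. F h) = (\<Sum>h\<in>Pair False ` C0 C. F h) + (\<Sum>h\<in>Pair True ` C1 C. F h)"
    by (subst Ceq) (rule sum.union_disjoint[OF f0 f1 d])
  also have "(\<Sum>h\<in>Pair False ` C0 C. F h) = (\<Sum>j\<in>C0 C. F (False, j))"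
    by (rule sum.reindex_cong[of "Pair False"]) (auto simp: inj_on_def)
  also have "(\<Sum>h\<in>Pair True ` C1 C. F h) = (\<Sum>j\<in>C1 C. F (True, j))"
    by (rule sum.reindex_cong[of "Pair True"]) (auto simp: inj_on_def)
  finally show ?thesis .
qed

lemma ia_restrict:
  assumes C: "C \<subseteq> dic_elems n"
  shows "idem_apply n \<chi> C g = (\<Sum>h\<in>C. dic_idem n \<chi> g h)"
proof -
  have "idem_apply n \<chi> C g = (\<Sum>h\<in>dic_elems n. if h \<in> C then dic_idem n \<chi> g h else 0)"
    unfolding idem_apply_def by (rule sum.cong) auto
  also have "\<dots> = (\<Sum>h\<in>C. if h \<in> C then dic_idem n \<chi> g h else 0)"
    by (rule sum.mono_neutral_right[OF fin_G C]) auto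
  also have "\<dots> = (\<Sum>h\<in>C. dic_idem n \<chi> g h)" by simp
  finally show ?thesis .
qed

lemma chi3_conj: "dic_char n Chi3 x = cnj (dic_char n Chi2 x)"
  by (cases x) simp

lemma annih_chi23: "annihilates n Chi3 C \<longleftrightarrow> annihilates n Chi2 C"
proof -
  have "idem_apply n Chi3 C g = cnj (idem_apply n Chi2 C g)" for g
    unfolding idem_apply_def cnj_sum
    by (rule sum.cong) (simp_all add: dic_idem_def chi3_conj)
  then show ?thesis unfolding annihilates_def by simp
qed

definition Cs :: "nat \<Rightarrow> int set \<Rightarrow> nat \<Rightarrow> int \<Rightarrow> real" where
  "Cs n T r a = (\<Sum>j\<in>T. cos (pi * real r * of_int (j - a) / real n))"




lemma cos_per:
  assumes n: "n > 0" and "t mod (2 * int n) = t' mod (2 * int n)"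
  shows "cos (pi * real r * of_int t / real n) = cos (pi * real r * of_int t' / real n)"
proof -
  have "cis (pi * of_int (int r) * of_int t / of_nat n) = cis (pi * of_int (int r) * of_int t' / of_nat n)"
    by (rule cis_per[OF assms])
  then have "Re (cis (pi * real r * of_int t / real n)) = Re (cis (pi * real r * of_int t' / real n))"
    by simp
  then show ?thesis by simp
qed

lemma psi_sum_F:
  assumes n: "n > 0" and C: "C \<subseteq> dic_elems n"
  shows "(\<Sum>h\<in>C. dic_char n (Psi r) (dic_mult n (dic_inv n (False, a)) h)) = of_real (2 * Cs n (C0 C) r a)"
proof -
  let ?N = "2 * int n"
  have t1: "dic_char n (Psi r) (dic_mult n (dic_inv n (False, a)) (True, j)) = 0" for j by simp
  have t0: "dic_char n (Psi r) (dic_mult n (dic_inv n (False, a)) (False, j)) = of_real (2 * cos (pi * real r * of_int (j - a) / real n))" for j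
  proof -
    have e: "((- a) mod ?N + j) mod ?N mod ?N = (j - a) mod ?N"
    proof -
      have "((- a) mod ?N + j) mod ?N mod ?N = (- a + j) mod ?N" by (simp add: mod_add_left_eq)
      also have "- a + j = j - a" by simp
      finally show ?thesis .
    qed
    show ?thesis using cos_per[OF n e, of r] by simp
  qed
  show ?thesis unfolding sum_C_split[OF C] t1 t0 Cs_def
    by (simp add: of_real_sum sum_distrib_left)
qed

lemma psi_sum_T:
  assumes n: "n > 0" and C: "C \<subseteq> dic_elems n"
  shows "(\<Sum>h\<in>C. dic_char n (Psi r) (dic_mult n (dic_inv n (True, a)) h)) = of_real (2 * Cs n (C1 C) r a)"
proof -
  let ?N = "2 * int n"
  have t1: "dic_char n (Psi r) (dic_mult n (dic_inv n (True, a)) (False, j)) = 0" for j by simp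
  have t0: "dic_char n (Psi r) (dic_mult n (dic_inv n (True, a)) (True, j)) = of_real (2 * cos (pi * real r * of_int (j - a) / real n))" for j
  proof -
    have e: "(int n + j - (a + int n) mod ?N) mod ?N mod ?N = (j - a) mod ?N"
    proof -
      have "(int n + j - (a + int n) mod ?N) mod ?N mod ?N = (int n + j - (a + int n)) mod ?N" by (simp add: mod_diff_right_eq)
      also have "int n + j - (a + int n) = j - a" by simp
      finally show ?thesis .
    qed
    show ?thesis using cos_per[OF n e, of r] by simp
  qed
  show ?thesis unfolding sum_C_split[OF C] t1 t0 Cs_def
    by (simp add: of_real_sum sum_distrib_left)
qed

lemma Cs_Re: "Cs n T r a = Re (cis (- (pi * real r * of_int a / real n)) * Zf n T (int r))"
  unfolding Cs_def Zf_def sum_distrib_left Re_sum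
proof (rule sum.cong[OF refl])
  fix j
  have "cis (- (pi * real r * of_int a / real n)) * cis (pi * of_int (int r) * of_int j / of_nat n)
     = cis (- (pi * real r * of_int a / real n) + pi * of_int (int r) * of_int j / of_nat n)"
    by (rule cis_mult)
  also have "- (pi * real r * of_int a / real n) + pi * of_int (int r) * of_int j / of_nat n
      = pi * real r * of_int (j - a) / real n"
  proof -
    have "pi * real r * of_int (j - a) = pi * of_int (int r) * of_int j - pi * real r * of_int a"
      by (simp add: algebra_simps)
    then show ?thesis by (simp add: diff_divide_distrib)
  qed
  finally show "cos (pi * real r * of_int (j - a) / real n) =
    Re (cis (- (pi * real r * of_int a / real n)) * cis (pi * of_int (int r) * of_int j / of_nat n))"
    by simp
qed

lemma Cs_Zf:
  assumes n: "n > 0" and s: "sin (pi * real r / real n) \<noteq> 0"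
  shows "(\<forall>a\<in>{0..<2 * int n}. Cs n T r a = 0) \<longleftrightarrow> Zf n T (int r) = 0"
proof
  assume "Zf n T (int r) = 0"
  then show "\<forall>a\<in>{0..<2 * int n}. Cs n T r a = 0" unfolding Cs_Re by simp
next
  assume h: "\<forall>a\<in>{0..<2 * int n}. Cs n T r a = 0"
  define Z where "Z = Zf n T (int r)"
  define \<theta> where "\<theta> = pi * real r / real n"
  have "Cs n T r 0 = 0" using h n by simp
  then have re: "Re Z = 0" unfolding Cs_Re Z_def by simp
  have "Cs n T r 1 = 0" using h n by simp
  then have "Re (cis (- \<theta>) * Z) = 0" unfolding Cs_Re Z_def \<theta>_def by simp
  then have "cos \<theta> * Re Z + sin \<theta> * Im Z = 0" by (simp add: cis.code)
  then have "sin \<theta> * Im Z = 0" using re by simp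
  then have im: "Im Z = 0" using s unfolding \<theta>_def by simp
  show "Zf n T (int r) = 0" using re im unfolding Z_def[symmetric] by (simp add: complex_eq_iff)
qed

lemma annih_psi:
  assumes n: "n > 0" and C: "C \<subseteq> dic_elems n" and s: "sin (pi * real r / real n) \<noteq> 0"
  shows "annihilates n (Psi r) C \<longleftrightarrow> Zf n (C0 C) (int r) = 0 \<and> Zf n (C1 C) (int r) = 0"
proof -
  define c where "c = dic_char n (Psi r) (False, 0) / of_nat (card (dic_elems n))"
  have "(False, 0) \<in> dic_elems n" using n unfolding dic_elems_def by simp
  then have "card (dic_elems n) \<noteq> 0" using fin_G by (metis card_0_eq empty_iff)
  then have c0: "c \<noteq> 0" unfolding c_def by simp
  define S where "S g = (\<Sum>h\<in>C. dic_char n (Psi r) (dic_mult n (dic_inv n g) h))" for g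
  have ia: "idem_apply n (Psi r) C g = c * cnj (S g)" for g
    unfolding ia_restrict[OF C] S_def dic_idem_def c_def cnj_sum sum_distrib_left ..
  have "annihilates n (Psi r) C \<longleftrightarrow> (\<forall>g\<in>dic_elems n. S g = 0)"
    unfolding annihilates_def ia using c0 by simp
  also have "\<dots> \<longleftrightarrow> (\<forall>a\<in>{0..<2 * int n}. S (False, a) = 0 \<and> S (True, a) = 0)"
  proof
    assume H: "\<forall>g\<in>dic_elems n. S g = 0"
    show "\<forall>a\<in>{0..<2 * int n}. S (False, a) = 0 \<and> S (True, a) = 0" using H unfolding G_eq by auto
  next
    assume H: "\<forall>a\<in>{0..<2 * int n}. S (False, a) = 0 \<and> S (True, a) = 0"
    show "\<forall>g\<in>dic_elems n. S g = 0"
    proof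
      fix g assume "g \<in> dic_elems n"
      then obtain b a where g: "g = (b, a)" and a: "a \<in> {0..<2 * int n}" unfolding G_eq by auto
      show "S g = 0" using H a unfolding g by (cases b) auto
    qed
  qed
  also have "\<dots> \<longleftrightarrow> (\<forall>a\<in>{0..<2 * int n}. Cs n (C0 C) r a = 0 \<and> Cs n (C1 C) r a = 0)"
    unfolding S_def psi_sum_F[OF n C] psi_sum_T[OF n C] by simp
  also have "\<dots> \<longleftrightarrow> (\<forall>a\<in>{0..<2 * int n}. Cs n (C0 C) r a = 0) \<and> (\<forall>a\<in>{0..<2 * int n}. Cs n (C1 C) r a = 0)"
    by blast
  also have "\<dots> \<longleftrightarrow> Zf n (C0 C) (int r) = 0 \<and> Zf n (C1 C) (int r) = 0"
    using Cs_Zf[OF n s] by simp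
  finally show ?thesis .
qed


lemma bezout_dvd:
  fixes k N l :: int
  assumes g: "gcd k N = 1" and d: "N dvd k * l"
  shows "N dvd l"
proof -
  obtain u v where uv: "u * k + v * N = gcd k N" using bezout_int by blast
  then have "l = u * (k * l) + N * (v * l)" using g by (simp add: algebra_simps) (metis mult.left_neutral distrib_right mult.commute mult.left_commute)
  moreover have "N dvd u * (k * l) + N * (v * l)" using d by simp
  ultimately show ?thesis by simp
qed

lemma Zf_gal:
  assumes n: "n > 0" and S: "\<forall>j\<in>S. j \<ge> 0" and k: "gcd k (2 * int n) = 1" and Z: "Zf n S r = 0"
  shows "Zf n S (k * r) = 0"
proof -
  define N where "N = 2 * int n"
  have N0: "N > 0" using n unfolding N_def by simp
  define k0 where "k0 = nat (k mod N)"
  have k0e: "int k0 = k mod N" unfolding k0_def using N0 by simp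
  have "gcd (int k0) N dvd k"
  proof -
    have d: "gcd (int k0) N dvd k mod N + N * (k div N)" unfolding k0e
      by (intro dvd_add gcd_dvd1 dvd_mult2 gcd_dvd2)
    have e: "k mod N + N * (k div N) = k" by (rule mod_mult_div_eq)
    show ?thesis using d unfolding e .
  qed
  then have "gcd (int k0) N dvd gcd k N" by (rule gcd_greatest[OF _ gcd_dvd2])
  then have "gcd (int k0) N dvd 1" using k unfolding N_def by simp
  then have "gcd (int k0) N = 1" by simp
  then have "int (gcd k0 (2 * n)) = 1" unfolding N_def by (simp add: gcd_int_int_eq[symmetric])
  then have g0: "gcd k0 (2 * n) = 1" by simp
  have "Zf n S (int k0 * r) = 0" by (rule Zf_galois_pos[OF n S g0 Z])
  moreover have "(int k0 * r) mod (2 * int n) = (k * r) mod (2 * int n)"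
    unfolding k0e N_def by (simp add: mod_mult_left_eq)
  then have "Zf n S (int k0 * r) = Zf n S (k * r)" by (rule Zf_per[OF n])
  ultimately show ?thesis by simp
qed

lemma Zf_equiv:
  assumes n: "n > 0" and S: "\<forall>j\<in>S. j \<ge> 0" and k: "gcd k (2 * int n) = 1"
  shows "Zf n S (k * r) = 0 \<longleftrightarrow> Zf n S r = 0"
proof
  assume Z: "Zf n S (k * r) = 0"
  obtain u v where uv: "u * k + v * (2 * int n) = gcd k (2 * int n)" using bezout_int by blast
  then have uv1: "u * k + v * (2 * int n) = 1" using k by simp
  have "gcd u (2 * int n) dvd u * k + v * (2 * int n)"
    by (intro dvd_add dvd_mult2 gcd_dvd1 dvd_mult gcd_dvd2)
  then have "gcd u (2 * int n) dvd 1" using uv1 by simp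
  then have gu: "gcd u (2 * int n) = 1" by simp
  have Zu: "Zf n S (u * (k * r)) = 0" by (rule Zf_gal[OF n S gu Z])
  have "u * (k * r) = r + (2 * int n) * (- v * r)"
  proof -
    have "u * (k * r) = (u * k) * r" by (simp add: mult.assoc)
    also have "u * k = 1 - v * (2 * int n)" using uv1 by simp
    finally show ?thesis by (simp add: algebra_simps)
  qed
  then have "(u * (k * r)) mod (2 * int n) = (r + (2 * int n) * (- v * r)) mod (2 * int n)" by (simp only:)
  also have "\<dots> = r mod (2 * int n)" by (rule mod_mult_self2)
  finally have "(u * (k * r)) mod (2 * int n) = r mod (2 * int n)" .
  then have "Zf n S (u * (k * r)) = Zf n S r" by (rule Zf_per[OF n])
  then show "Zf n S r = 0" using Zu by simp
next
  assume "Zf n S r = 0"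
  then show "Zf n S (k * r) = 0" by (rule Zf_gal[OF n S k])
qed

lemma T_psi: "Psi x \<in> T_of n C \<longleftrightarrow> (1 \<le> x \<and> x \<le> n - 1) \<and> annihilates n (Psi x) C"
  unfolding T_of_def dic_irr_def by auto

lemma sin_ne: assumes "0 < x" "x < n" shows "sin (pi * real x / real n) \<noteq> 0"
proof -
  have "0 < pi * real x / real n" using assms by simp
  moreover have "pi * real x / real n < pi" using assms by (simp add: divide_less_eq)
  ultimately show ?thesis using sin_gt_zero by fastforce
qed

theorem corollary6p1:
  fixes n :: nat and C :: "dic set"
  assumes "odd n" and "n > 0"
    and "C \<subseteq> dic_elems n" and "C \<noteq> {}"
    and "delsarte_design n (T_of n C) C"
  shows "(Chi2 \<in> T_of n C \<longleftrightarrow> Chi3 \<in> T_of n C)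
    \<and> (\<forall>l k. 1 \<le> l \<and> l \<le> n - 1 \<and> - int n < k \<and> k < int n \<and> gcd k (2 * int n) = 1
          \<longrightarrow> (Psi l \<in> T_of n C \<longleftrightarrow> Psi (nat \<bar>cmod (k * int l) (2 * int n)\<bar>) \<in> T_of n C))"
proof
  have n: "n > 0" using assms by simp
  have C: "C \<subseteq> dic_elems n" using assms by simp
  show "Chi2 \<in> T_of n C \<longleftrightarrow> Chi3 \<in> T_of n C"
    unfolding T_of_def dic_irr_def using annih_chi23 by auto
  have S0: "\<forall>j\<in>C0 C. j \<ge> 0" using C unfolding C0_def dic_elems_def by auto
  have S1: "\<forall>j\<in>C1 C. j \<ge> 0" using C unfolding C1_def dic_elems_def by auto
  show "\<forall>l k. 1 \<le> l \<and> l \<le> n - 1 \<and> - int n < k \<and> k < int n \<and> gcd k (2 * int n) = 1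
          \<longrightarrow> (Psi l \<in> T_of n C \<longleftrightarrow> Psi (nat \<bar>cmod (k * int l) (2 * int n)\<bar>) \<in> T_of n C)"
  proof (intro allI impI)
    fix l :: nat and k :: int
    assume h: "1 \<le> l \<and> l \<le> n - 1 \<and> - int n < k \<and> k < int n \<and> gcd k (2 * int n) = 1"
    have l1: "1 \<le> l" and l2: "l < n" and gk: "gcd k (2 * int n) = 1" using h n by auto
    define N where "N = 2 * int n"
    have N0: "N > 0" using n unfolding N_def by simp
    define c where "c = cmod (k * int l) N"
    have cp: "c mod N = (k * int l) mod N" "- N < 2 * c" "2 * c \<le> N"
      using cmod_props[OF N0, of "k * int l"] unfolding c_def by auto
    have gkN: "gcd k N = 1" using gk unfolding N_def .
    have c0: "c \<noteq> 0"
    proof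
      assume "c = 0"
      then have "(k * int l) mod N = 0" using cp by simp
      then have "N dvd k * int l" by (simp add: mod_eq_0_iff_dvd)
      then have "N dvd int l" by (rule bezout_dvd[OF gkN])
      then have "N \<le> int l" using l1 by (simp add: zdvd_imp_le)
      then show False using l2 unfolding N_def by simp
    qed
    have cn: "c \<noteq> int n"
    proof
      assume "c = int n"
      then have "(k * int l) mod N = int n mod N" using cp by simp
      then have "N dvd k * int l - int n" by (simp add: mod_eq_dvd_iff)
      then have "int n dvd k * int l - int n" unfolding N_def by (rule dvd_mult_right)
      then have "int n dvd (k * int l - int n) + int n" by (rule dvd_add) simp
      then have nd: "int n dvd k * int l" by simp
      have gn: "gcd k (int n) = 1"
      proof -
        have "gcd k (int n) dvd gcd k N" unfolding N_def by (rule gcd_greatest[OF gcd_dvd1]) (simp add: dvd_mult2 gcd_dvd2)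
        then show ?thesis using gkN by simp
      qed
      have "int n dvd int l" by (rule bezout_dvd[OF gn nd])
      then have "n dvd l" by simp
      then have "n \<le> l" using l1 by (intro dvd_imp_le) auto
      then show False using l2 by simp
    qed
    define m where "m = nat \<bar>c\<bar>"
    have m1: "1 \<le> m" and m2: "m < n" using c0 cn cp unfolding m_def N_def by auto
    have key: "Zf n S (int m) = 0 \<longleftrightarrow> Zf n S (int l) = 0" if S: "\<forall>j\<in>S. j \<ge> 0" for S
    proof -
      have "Zf n S c = Zf n S (k * int l)" using Zf_per[OF n] cp(1) unfolding N_def by blast
      moreover have "Zf n S (int m) = 0 \<longleftrightarrow> Zf n S c = 0"
      proof (cases "c \<ge> 0")
        case True
        then have "int m = c" unfolding m_def by simp
        then show ?thesis by simp
      next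
        case False
        then have "int m = - c" unfolding m_def by simp
        then show ?thesis using Zf_neg[of n S c] by simp
      qed
      ultimately show ?thesis using Zf_equiv[OF n S gk] by simp
    qed
    have "Psi l \<in> T_of n C \<longleftrightarrow> Zf n (C0 C) (int l) = 0 \<and> Zf n (C1 C) (int l) = 0"
      unfolding T_psi using annih_psi[OF n C sin_ne[of l n]] l1 l2 by auto
    also have "\<dots> \<longleftrightarrow> Zf n (C0 C) (int m) = 0 \<and> Zf n (C1 C) (int m) = 0"
      using key[OF S0] key[OF S1] by simp
    also have "\<dots> \<longleftrightarrow> Psi m \<in> T_of n C"
      unfolding T_psi using annih_psi[OF n C sin_ne[of m n]] m1 m2 by auto
    finally show "Psi l \<in> T_of n C \<longleftrightarrow> Psi (nat \<bar>cmod (k * int l) (2 * int n)\<bar>) \<in> T_of n C"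
      unfolding m_def c_def N_def .
  qed
qed


end
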